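(* Let $\mathcal{C}\subset\mathbb{R}^N$ be a nonempty compact convex set with Euclidean projection $\pi_{\mathcal{C}}$. For every $p\in\mathcal{C}$, every $r>0$ and every unit vector $u\in\mathbb{R}^N$ ($\|u\|=1$), $$\langle u,\pi_{\mathcal{C}}(p+ru)-p\rangle\ge\frac{r}{2}\,\|u\|_{\mathcal{C}}^2(p;r).$$
   Context: Local norm: for $p\in\mathcal{C}$, a vector $u$ and $r>0$, $\|u\|_{\mathcal{C}}(p;r)=\sup_{v\in\mathcal{C},\,\|v-p\|=r}\max\big(\langle u,v-p\rangle/r,\,0\big)$ if there exists $v\in\mathcal{C}$ with $\|v-p\|=r$, and $\|u\|_{\mathcal{C}}(p;r)=0$ otherwise. *)

theory Defs
  imports "HOL-Analysis.Analysis"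
begin

definition local_norm :: "'a::euclidean_space set \<Rightarrow> 'a \<Rightarrow> 'a \<Rightarrow> real \<Rightarrow> real" where
  "local_norm C u p r =
     (if (\<exists>v\<in>C. norm (v - p) = r)
      then (SUP v\<in>{v\<in>C. norm (v - p) = r}. max (inner u (v - p) / r) 0)
      else 0)"

end

theory Submission
  imports Defs
begin

lemma key_ineq:
  fixes C :: "(real ^ 'n) set" and p u v :: "real ^ 'n" and r s :: real
  assumes "closed C" and "convex C" and "p \<in> C" and "v \<in> C" and "norm u = 1"
    and "0 \<le> s" and "s \<le> 1"
  shows "2 * r * inner u (closest_point C (p + r *\<^sub>R u) - p)
          \<ge> 2 * s * r * inner u (v - p) - s\<^sup>2 * (norm (v - p))\<^sup>2"
proof -
  define a where "a = closest_point C (p + r *\<^sub>R u) - p"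
  define d where "d = v - p"
  have w0: "(1 - s) *\<^sub>R p + s *\<^sub>R v \<in> C"
    using assms(2) assms(3,4,6,7) unfolding convex_alt by blast
  have "(1 - s) *\<^sub>R p + s *\<^sub>R v = p + s *\<^sub>R d"
    unfolding d_def by (simp add: scaleR_diff_left scaleR_diff_right)
  with w0 have w: "p + s *\<^sub>R d \<in> C" by simp
  have "dist (p + r *\<^sub>R u) (closest_point C (p + r *\<^sub>R u)) \<le> dist (p + r *\<^sub>R u) (p + s *\<^sub>R d)"
    using closest_point_le[OF assms(1) w] .
  hence "norm (r *\<^sub>R u - a) \<le> norm (r *\<^sub>R u - s *\<^sub>R d)"
    unfolding a_def dist_norm by (simp add: algebra_simps)
  hence "(norm (r *\<^sub>R u - a))\<^sup>2 \<le> (norm (r *\<^sub>R u - s *\<^sub>R d))\<^sup>2"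
    by (simp add: power_mono)
  hence "inner (r *\<^sub>R u - a) (r *\<^sub>R u - a) \<le> inner (r *\<^sub>R u - s *\<^sub>R d) (r *\<^sub>R u - s *\<^sub>R d)"
    by (simp add: power2_norm_eq_inner)
  moreover have "inner u u = 1" using assms(5) by (simp add: norm_eq_1)
  ultimately have "r * r - 2 * r * inner u a + inner a a \<le> r * r - 2 * r * s * inner u d + s * s * inner d d"
    by (simp add: inner_diff_left inner_diff_right inner_commute algebra_simps)
  hence e2: "2 * r * inner u a \<ge> 2 * r * s * inner u d - s * s * inner d d"
    using inner_ge_zero[of a] by linarith
  have e3: "s\<^sup>2 * (norm d)\<^sup>2 = s * s * inner d d"
    by (simp add: power2_norm_eq_inner[symmetric] power2_eq_square)
  have e4: "2 * s * r * inner u d = 2 * r * s * inner u d" by simp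
  show ?thesis unfolding a_def[symmetric] d_def[symmetric]
    using e2 e3 e4 by linarith
qed

theorem theorem2p5:
  fixes C :: "(real ^ 'n) set" and p u :: "real ^ 'n" and r :: real
  assumes "C \<noteq> {}" and "compact C" and "convex C"
    and "p \<in> C" and "r > 0" and "norm u = 1"
  shows "inner u (closest_point C (p + r *\<^sub>R u) - p) \<ge> (r / 2) * (local_norm C u p r)\<^sup>2"
proof -
  define A where "A = inner u (closest_point C (p + r *\<^sub>R u) - p)"
  have cl: "closed C" using assms(2) compact_imp_closed by blast
  have A0: "A \<ge> 0"
    using key_ineq[OF cl assms(3) assms(4) assms(4) assms(6), of 0 r] assms(5)
    unfolding A_def by (simp add: zero_le_mult_iff)
  define B where "B = sqrt (2 * A / r)"
  have B0: "B \<ge> 0" unfolding B_def using A0 assms(5) by simp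
  have each: "max (inner u (v - p) / r) 0 \<le> B" if v: "v \<in> C" "norm (v - p) = r" for v
  proof -
    define t where "t = inner u (v - p) / r"
    have "\<bar>inner u (v - p)\<bar> \<le> norm u * norm (v - p)" by (rule Cauchy_Schwarz_ineq2)
    hence "\<bar>t\<bar> \<le> 1" unfolding t_def using v assms(5,6) by (simp add: abs_div)
    define m where "m = max t 0"
    have m01: "0 \<le> m" "m \<le> 1" unfolding m_def using \<open>\<bar>t\<bar> \<le> 1\<close> by auto
    have ip: "inner u (v - p) = r * t" unfolding t_def using assms(5) by simp
    have "2 * r * A \<ge> 2 * m * r * (r * t) - m\<^sup>2 * r\<^sup>2"
      using key_ineq[OF cl assms(3) assms(4) v(1) assms(6) m01, of r] v(2) ip
      unfolding A_def by simp
    moreover have "m * t = m\<^sup>2" unfolding m_def by (simp add: max_def power2_eq_square)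
    moreover have "2 * m * r * (r * t) = 2 * (m * t) * r\<^sup>2" by (simp add: power2_eq_square algebra_simps)
    moreover have "(m * t) * r\<^sup>2 = m\<^sup>2 * r\<^sup>2" using calculation(2) by simp
    ultimately have "2 * r * A \<ge> m\<^sup>2 * r\<^sup>2" by linarith
    hence "m\<^sup>2 \<le> 2 * A / r" using assms(5) by (simp add: field_simps power2_eq_square)
    hence "m \<le> B" unfolding B_def using m01 by (simp add: real_le_rsqrt)
    thus ?thesis unfolding m_def t_def .
  qed
  have LN: "local_norm C u p r \<le> B \<and> local_norm C u p r \<ge> 0"
  proof (cases "\<exists>v\<in>C. norm (v - p) = r")
    case True
    hence ne: "{v\<in>C. norm (v - p) = r} \<noteq> {}" by auto
    have bdd: "bdd_above ((\<lambda>v. max (inner u (v - p) / r) 0) ` {v\<in>C. norm (v - p) = r})"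
      using each by (intro bdd_aboveI2[where M=B]) auto
    have le: "(SUP v\<in>{v\<in>C. norm (v - p) = r}. max (inner u (v - p) / r) 0) \<le> B"
      using ne each by (auto intro!: cSUP_least)
    obtain v0 where v0: "v0 \<in> {v\<in>C. norm (v - p) = r}" using ne by auto
    have "max (inner u (v0 - p) / r) 0 \<le> (SUP v\<in>{v\<in>C. norm (v - p) = r}. max (inner u (v - p) / r) 0)"
      using cSUP_upper[OF v0 bdd] .
    hence "0 \<le> (SUP v\<in>{v\<in>C. norm (v - p) = r}. max (inner u (v - p) / r) 0)"
      by linarith
    then show ?thesis using le True unfolding local_norm_def by simp
  next
    case False
    then show ?thesis using B0 unfolding local_norm_def by simp
  qed
  hence "(local_norm C u p r)\<^sup>2 \<le> B\<^sup>2" by (simp add: power_mono)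
  also have "B\<^sup>2 = 2 * A / r" unfolding B_def using A0 assms(5) by simp
  finally have "(local_norm C u p r)\<^sup>2 \<le> 2 * A / r" .
  hence "(r / 2) * (local_norm C u p r)\<^sup>2 \<le> (r/2) * (2 * A / r)"
    using assms(5) by (intro mult_left_mono) auto
  also have "\<dots> = A" using assms(5) by simp
  finally show ?thesis unfolding A_def .
qed

end
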